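(* Let $n,x$ be integers with $1<x<n$, so that $G=C_{2n}(x,1,n)$ is a $5$-regular circulant graph. If $n\equiv 1 \pmod 3$, $x\equiv 2\pmod 3$ and $2<x<\tfrac{n}{2}$, then $G$ is word-representable.
   Context: Two distinct letters $x,y$ alternate in a word $w$ if, after deleting all other letters from $w$, the resulting word is of the form $xyxy\cdots$ or $yxyx\cdots$ (of even or odd length). A graph $G=(V,E)$ is word-representable if there is a word $w$ over the alphabet $V$, containing every letter of $V$ at least once, such that for all distinct $x,y\in V$, $xy\in E$ if and only if $x$ and $y$ alternate in $w$. For an integer $m$ and a set $R$ of positive integers each at most $m/2$, the circulant graph $C_m(R)$ has vertex set $\{0,1,\dots,m-1\}$, with $i$ and $j$ adjacent iff $\min(|i-j|,\,m-|i-j|)\in R$. $C_{2n}(x,1,n)$ denotes the circulant graph on $2n$ vertices with jump set $\{1,x,n\}$; it is $5$-regular exactly when $1<x<n$. *)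

theory Defs
  imports Main
begin

definition alternate :: "'a list \<Rightarrow> 'a \<Rightarrow> 'a \<Rightarrow> bool" where
  "alternate w x y \<longleftrightarrow>
     (let u = filter (\<lambda>c. c = x \<or> c = y) w in
        \<forall>i. Suc i < length u \<longrightarrow> u ! i \<noteq> u ! Suc i)"

definition word_representable :: "'a set \<Rightarrow> ('a \<Rightarrow> 'a \<Rightarrow> bool) \<Rightarrow> bool" where
  "word_representable V E \<longleftrightarrow>
     (\<exists>w. set w = V \<and>
        (\<forall>x\<in>V. \<forall>y\<in>V. x \<noteq> y \<longrightarrow> (E x y \<longleftrightarrow> alternate w x y)))"

definition circ_adj :: "nat \<Rightarrow> nat set \<Rightarrow> nat \<Rightarrow> nat \<Rightarrow> bool" where
  "circ_adj m R i j \<longleftrightarrow>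
     i < m \<and> j < m \<and>
     (let d = (if i \<le> j then j - i else i - j) in min d (m - d) \<in> R)"

end

theory Submission
  imports Defs
begin


fun nr :: "'a list \<Rightarrow> bool" where
  "nr (a # b # r) = (a \<noteq> b \<and> nr (b # r))"
| "nr _ = True"

lemma nr_iff: "nr u \<longleftrightarrow> (\<forall>i. Suc i < length u \<longrightarrow> u ! i \<noteq> u ! Suc i)"
proof (induction u rule: nr.induct)
  case (1 a b r)
  show ?case
  proof
    assume h: "nr (a # b # r)"
    show "\<forall>i. Suc i < length (a # b # r) \<longrightarrow> (a # b # r) ! i \<noteq> (a # b # r) ! Suc i"
    proof (intro allI impI)
      fix i assume "Suc i < length (a # b # r)"
      then show "(a # b # r) ! i \<noteq> (a # b # r) ! Suc i"
        using h 1 by (cases i) auto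
    qed
  next
    assume h: "\<forall>i. Suc i < length (a # b # r) \<longrightarrow> (a # b # r) ! i \<noteq> (a # b # r) ! Suc i"
    have "a \<noteq> b" using h[rule_format, of 0] by simp
    moreover have "\<forall>i. Suc i < length (b # r) \<longrightarrow> (b # r) ! i \<noteq> (b # r) ! Suc i"
      using h[rule_format, of "Suc _"] by auto
    ultimately show "nr (a # b # r)" using 1 by simp
  qed
qed (auto simp: less_Suc_eq)

lemma alternate_nr: "alternate w x y \<longleftrightarrow> nr (filter (\<lambda>c. c = x \<or> c = y) w)"
  by (simp add: alternate_def nr_iff Let_def)

lemma nr_Cons: "nr (v # ys) \<longleftrightarrow> nr ys \<and> (ys \<noteq> [] \<longrightarrow> v \<noteq> hd ys)"
  by (cases ys) auto

lemma nr_append: "nr (xs @ ys) \<longleftrightarrow> nr xs \<and> nr ys \<and> (xs \<noteq> [] \<longrightarrow> ys \<noteq> [] \<longrightarrow> last xs \<noteq> hd ys)"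
  by (induction xs) (auto simp: nr_Cons)

lemma nr_mid: "nr (xs @ ys @ zs) \<Longrightarrow> nr ys"
  by (simp add: nr_append)

lemma nr_rep: "x \<noteq> y \<Longrightarrow> nr (concat (replicate k [x,y])) \<and> nr (y # concat (replicate k [x,y]))"
  by (induction k) auto

definition arcR :: "'a list \<Rightarrow> ('a \<Rightarrow> 'a \<Rightarrow> bool) \<Rightarrow> ('a \<Rightarrow> nat) \<Rightarrow> 'a \<Rightarrow> 'a \<Rightarrow> bool" where
  "arcR P E r p q \<longleftrightarrow> p \<in> set P \<and> q \<in> set P \<and> E p q \<and> r p < r q"

locale strep =
  fixes P :: "'a list" and E :: "'a \<Rightarrow> 'a \<Rightarrow> bool" and r :: "'a \<Rightarrow> nat"
  assumes dist: "distinct P"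
  and sym: "\<And>p q. E p q \<Longrightarrow> E q p"
  and irr: "\<And>p. \<not> E p p"
  and rinj: "\<And>p q. p \<in> set P \<Longrightarrow> q \<in> set P \<Longrightarrow> r p = r q \<Longrightarrow> p = q"
  and ord: "\<And>p q. p \<in> set P \<Longrightarrow> q \<in> set P \<Longrightarrow> r p < r q \<Longrightarrow> filter (\<lambda>c. c = p \<or> c = q) P = [p,q]"
  and h3: "\<And>a b c d. arcR P E r a b \<Longrightarrow> arcR P E r b c \<Longrightarrow> arcR P E r c d \<Longrightarrow> \<not> E a d"
  and h4: "\<And>a b c d e. arcR P E r a b \<Longrightarrow> arcR P E r b c \<Longrightarrow> arcR P E r c d \<Longrightarrow> arcR P E r d e \<Longrightarrow> False"
begin

abbreviation "arc \<equiv> arcR P E r"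
abbreviation "reach \<equiv> arc\<^sup>*\<^sup>*"

lemma reach_le: "reach a b \<Longrightarrow> r a \<le> r b"
  by (induction rule: rtranclp_induct) (auto simp: arcR_def)

lemma reach_lt: "reach a b \<Longrightarrow> a \<noteq> b \<Longrightarrow> r a < r b"
proof -
  assume "reach a b" "a \<noteq> b"
  then have "arc\<^sup>+\<^sup>+ a b" using rtranclpD by metis
  then show ?thesis by (induction rule: tranclp_induct) (auto simp: arcR_def)
qed

lemma pow4: "(arc ^^ m) a b \<Longrightarrow> 4 \<le> m \<Longrightarrow> False"
proof -
  assume h: "(arc ^^ m) a b" "4 \<le> m"
  obtain k where m: "m = 4 + k" using h(2) by (metis add.commute le_add_diff_inverse2)
  from h(1) obtain c where "(arc ^^ 4) a c" using m relpowp_add by (metis relcomppE)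
  then show False using h4
    by (auto simp: numeral_eq_Suc relpowp_Suc_left)
qed

lemma pow3: "(arc ^^ 3) a b \<Longrightarrow> \<not> E a b"
  using h3 by (auto simp: numeral_eq_Suc relpowp_Suc_left)

lemma ST:
  assumes "reach w x" "reach x y" "reach y u" "x \<noteq> y" "E w u"
  shows "E x y"
proof -
  obtain i j k where ij: "(arc ^^ i) w x" "(arc ^^ j) x y" "(arc ^^ k) y u"
    using assms(1-3) by (meson rtranclp_power)
  have j0: "j \<noteq> 0" using ij(2) assms(4) by (cases j) auto
  have tot: "(arc ^^ (i + j + k)) w u" using ij relpowp_add by (metis relcomppI)
  show ?thesis
  proof (cases "j = 1")
    case True
    then show ?thesis using ij(2) by (auto simp: arcR_def relcompp_apply)
  next
    case False
    then have "2 \<le> j" using j0 by simp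
    show ?thesis
    proof (cases "i + j + k = 2")
      case True
      then have "i = 0" "k = 0" using \<open>2 \<le> j\<close> by auto
      then show ?thesis using ij assms(5) by simp
    next
      case False
      then have "i + j + k = 3 \<or> 4 \<le> i + j + k" using \<open>2 \<le> j\<close> by auto
      then show ?thesis using tot pow3 pow4 assms(5) by metis
    qed
  qed
qed

definition unitw :: "'a set \<Rightarrow> 'a set \<Rightarrow> 'a list" where
  "unitw X Y = filter (\<lambda>v. v \<notin> Y) P @ filter (\<lambda>v. v \<in> X) P @ filter (\<lambda>v. v \<in> Y) P @ filter (\<lambda>v. v \<notin> X) P"

definition Xs :: "'a \<Rightarrow> 'a \<Rightarrow> 'a set" where
  "Xs a b = (if reach a b then {v. reach v a} else {v. reach v b})"
definition Ys :: "'a \<Rightarrow> 'a \<Rightarrow> 'a set" where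
  "Ys a b = (if reach a b then {v. reach b v} else {})"
definition U :: "'a \<Rightarrow> 'a \<Rightarrow> 'a list" where
  "U a b = (if a \<noteq> b \<and> \<not> E a b \<and> r a < r b then unitw (Xs a b) (Ys a b) else [])"
definition W :: "'a list" where
  "W = P @ concat (map (\<lambda>(a,b). U a b) (List.product P P))"

lemma filt2: "p \<in> set P \<Longrightarrow> q \<in> set P \<Longrightarrow> r p < r q \<Longrightarrow>
   filter (\<lambda>c. c = p \<or> c = q) (filter Q P) = filter Q [p,q]"
proof -
  assume a: "p \<in> set P" "q \<in> set P" "r p < r q"
  have "filter (\<lambda>c. c = p \<or> c = q) (filter Q P) = filter Q (filter (\<lambda>c. c = p \<or> c = q) P)"
    by (simp add: filter_filter conj_commute)
  also have "\<dots> = filter Q [p,q]" using ord[OF a] by simp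
  finally show ?thesis .
qed

lemma unit_filter:
  assumes "p \<in> set P" "q \<in> set P" "r p < r q"
  shows "filter (\<lambda>c. c = p \<or> c = q) (unitw X Y) =
    filter (\<lambda>v. v \<notin> Y) [p,q] @ filter (\<lambda>v. v \<in> X) [p,q] @ filter (\<lambda>v. v \<in> Y) [p,q] @ filter (\<lambda>v. v \<notin> X) [p,q]"
  unfolding unitw_def using filt2[OF assms] by simp

lemma set_W: "set W = set P"
  unfolding W_def U_def unitw_def by auto

lemma unit_props:
  assumes "a \<noteq> b" "\<not> E a b" "r a < r b"
  shows "(\<forall>p q. arc p q \<longrightarrow> q \<in> Xs a b \<longrightarrow> p \<in> Xs a b)
       \<and> (\<forall>p q. arc p q \<longrightarrow> p \<in> Ys a b \<longrightarrow> q \<in> Ys a b)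
       \<and> Xs a b \<inter> Ys a b = {}
       \<and> (\<forall>p q. p \<in> Xs a b \<longrightarrow> q \<in> Ys a b \<longrightarrow> \<not> E p q)"
proof (cases "reach a b")
  case True
  have d: "Xs a b \<inter> Ys a b = {}"
  proof (rule ccontr)
    assume "Xs a b \<inter> Ys a b \<noteq> {}"
    then obtain v where "reach v a" "reach b v" using True by (auto simp: Xs_def Ys_def)
    then have "reach b a" by simp
    then have "r b \<le> r a" by (rule reach_le)
    then show False using assms(3) by simp
  qed
  have ne: "\<forall>p q. p \<in> Xs a b \<longrightarrow> q \<in> Ys a b \<longrightarrow> \<not> E p q"
    using ST[of _ a b] True assms(1,2) by (auto simp: Xs_def Ys_def)
  show ?thesis using True d ne
    by (auto simp: Xs_def Ys_def intro: converse_rtranclp_into_rtranclp rtranclp.rtrancl_into_rtrancl)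
next
  case False
  then show ?thesis
    by (auto simp: Xs_def Ys_def intro: converse_rtranclp_into_rtranclp)
qed

lemma edge_unit:
  assumes "arc x y" "\<forall>p q. arc p q \<longrightarrow> q \<in> X \<longrightarrow> p \<in> X"
    "\<forall>p q. arc p q \<longrightarrow> p \<in> Y \<longrightarrow> q \<in> Y" "X \<inter> Y = {}" "\<forall>p q. p \<in> X \<longrightarrow> q \<in> Y \<longrightarrow> \<not> E p q"
  shows "filter (\<lambda>c. c = x \<or> c = y) (unitw X Y) = [x,y,x,y]"
proof -
  have xy: "x \<in> set P" "y \<in> set P" "r x < r y" "E x y" using assms(1) by (auto simp: arcR_def)
  have "y \<in> X \<longrightarrow> x \<in> X" "x \<in> Y \<longrightarrow> y \<in> Y" using assms(1-3) by auto
  moreover have "\<not> (x \<in> X \<and> x \<in> Y)" "\<not> (y \<in> X \<and> y \<in> Y)" using assms(4) by auto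
  moreover have "\<not> (x \<in> X \<and> y \<in> Y)" "\<not> (y \<in> X \<and> x \<in> Y)" using assms(5) xy(4) sym by auto
  ultimately show ?thesis
    unfolding unit_filter[OF xy(1-3)]
    by (cases "x \<in> X"; cases "y \<in> X"; cases "x \<in> Y"; cases "y \<in> Y") simp_all
qed

lemma edge_U:
  assumes "arc x y"
  shows "filter (\<lambda>c. c = x \<or> c = y) (U a b) = [] \<or> filter (\<lambda>c. c = x \<or> c = y) (U a b) = [x,y,x,y]"
proof (cases "a \<noteq> b \<and> \<not> E a b \<and> r a < r b")
  case True
  then show ?thesis using edge_unit[OF assms] unit_props[of a b] by (simp add: U_def)
next
  case False
  then show ?thesis by (auto simp: U_def)
qed

lemma concat_rep:
  assumes "\<forall>z \<in> set zs. z = [] \<or> z = [x,y,x,y]"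
  shows "\<exists>k. concat zs = concat (replicate k [x,y])"
  using assms
proof (induction zs)
  case Nil
  then show ?case by (metis concat.simps(1) replicate_0)
next
  case (Cons z zs)
  then obtain k where k: "concat zs = concat (replicate k [x,y])" by auto
  show ?case
  proof (cases "z = []")
    case True then show ?thesis using k by auto
  next
    case False
    then have "z = [x,y,x,y]" using Cons.prems by simp
    then have "concat (z # zs) = concat (replicate (Suc (Suc k)) [x,y])" using k by simp
    then show ?thesis by blast
  qed
qed

lemma edge_alt:
  assumes "arc x y"
  shows "alternate W x y"
proof -
  let ?f = "filter (\<lambda>c. c = x \<or> c = y)"
  let ?G = "map (\<lambda>(a,b). U a b) (List.product P P)"
  have xy: "x \<noteq> y" using assms irr by (auto simp: arcR_def)
  have xyP: "x \<in> set P" "y \<in> set P" "r x < r y" using assms by (auto simp: arcR_def)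
  have fP: "?f P = [x,y]" using ord[OF xyP] .
  have all: "\<forall>z \<in> set (map ?f ?G). z = [] \<or> z = [x,y,x,y]"
  proof
    fix z assume "z \<in> set (map ?f ?G)"
    then obtain a b where "z = ?f (U a b)" by auto
    then show "z = [] \<or> z = [x,y,x,y]" using edge_U[OF assms, of a b] by simp
  qed
  obtain k where k: "concat (map ?f ?G) = concat (replicate k [x,y])"
    using concat_rep[OF all] by blast
  have "?f W = ?f P @ concat (map ?f ?G)"
    unfolding W_def by (simp only: filter_append filter_concat)
  also have "\<dots> = concat (replicate (Suc k) [x,y])" using fP k by simp
  finally show ?thesis using nr_rep[OF xy, of "Suc k"] by (simp only: alternate_nr)
qed

lemma nonedge_unit:
  assumes "x \<in> set P" "y \<in> set P" "x \<noteq> y" "\<not> E x y" "r x < r y"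
  shows "\<not> nr (filter (\<lambda>c. c = x \<or> c = y) (U x y))"
proof (cases "reach x y")
  case True
  have "\<not> reach y x" using True reach_le reach_lt assms(3,5) by (metis leD)
  then have "x \<in> Xs x y" "y \<notin> Xs x y" "x \<notin> Ys x y" "y \<in> Ys x y" using True by (auto simp: Xs_def Ys_def)
  then show ?thesis using assms by (simp add: U_def unit_filter)
next
  case False
  then have "x \<notin> Xs x y" "y \<in> Xs x y" "x \<notin> Ys x y" "y \<notin> Ys x y" by (auto simp: Xs_def Ys_def)
  then show ?thesis using assms by (simp add: U_def unit_filter)
qed

lemma nonedge_alt:
  assumes "x \<in> set P" "y \<in> set P" "x \<noteq> y" "\<not> E x y" "r x < r y"
  shows "\<not> alternate W x y"
proof
  let ?f = "filter (\<lambda>c. c = x \<or> c = y)"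
  assume "alternate W x y"
  then have h: "nr (?f W)" by (simp only: alternate_nr)
  have "(x,y) \<in> set (List.product P P)" using assms by simp
  then obtain A B where AB: "List.product P P = A @ (x,y) # B" by (meson split_list)
  have eq: "?f W = (?f P @ ?f (concat (map (\<lambda>(a,b). U a b) A))) @
      ?f (U x y) @ ?f (concat (map (\<lambda>(a,b). U a b) B))"
    unfolding W_def AB by (simp only: map_append list.map concat_append concat.simps filter_append append_assoc prod.case)
  have "nr (?f (U x y))" using h unfolding eq by (rule nr_mid)
  then show False using nonedge_unit[OF assms] by contradiction
qed

lemma alt_sym: "alternate w x y = alternate w y x"
  unfolding alternate_def by (simp add: disj_commute)

theorem wr: "word_representable (set P) E"
  unfolding word_representable_def
proof (intro exI conjI ballI impI)
  show "set W = set P" by (rule set_W)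
next
  fix x y assume xy: "x \<in> set P" "y \<in> set P" "x \<noteq> y"
  have "r x \<noteq> r y" using rinj xy by blast
  then consider "r x < r y" | "r y < r x" by linarith
  then show "E x y \<longleftrightarrow> alternate W x y"
  proof cases
    case 1
    show ?thesis
    proof
      assume "E x y" then show "alternate W x y" using edge_alt xy 1 by (simp add: arcR_def)
    next
      assume "alternate W x y" then show "E x y" using nonedge_alt xy 1 by blast
    qed
  next
    case 2
    show ?thesis
    proof
      assume "E x y" then have "E y x" by (rule sym)
      then have "alternate W y x" using edge_alt[of y x] xy 2 by (simp add: arcR_def)
      then show "alternate W x y" using alt_sym[of W x y] by simp
    next
      assume "alternate W x y" then have "alternate W y x" using alt_sym[of W x y] by simp
      then have "E y x" using nonedge_alt xy 2 by blast
      then show "E x y" by (rule sym)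
    qed
  qed
qed

end



lemma E_iff:
  assumes "1 < x" "x < n"
  shows "circ_adj (2*n) {1, x, n} p q \<longleftrightarrow> p < 2*n \<and> q < 2*n \<and>
    (q = p + 1 \<or> p = q + 1 \<or> q = p + x \<or> p = q + x \<or> q = p + n \<or> p = q + n \<or>
     q + 1 = p + 2*n \<or> p + 1 = q + 2*n \<or> q + x = p + 2*n \<or> p + x = q + 2*n)"
  using assms unfolding circ_adj_def Let_def by (auto simp: min_def split: if_splits)

definition Pc :: "nat \<Rightarrow> nat list" where
  "Pc n = filter (\<lambda>v. v mod 3 = 0) [0..<2*n] @ filter (\<lambda>v. v mod 3 = 1) [0..<2*n] @ filter (\<lambda>v. v mod 3 = 2) [0..<2*n]"

definition rc :: "nat \<Rightarrow> nat \<Rightarrow> nat" where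
  "rc n v = (v mod 3) * (2*n) + v"

lemma modeq: "(a::nat) + k = b + l \<Longrightarrow> (a mod 3 + k mod 3) mod 3 = (b mod 3 + l mod 3) mod 3"
  by (metis mod_add_eq)

lemma mod3_cases: "(v::nat) mod 3 = 0 \<or> v mod 3 = 1 \<or> v mod 3 = 2"
  by arith

lemma rc_less:
  assumes "p < 2*n" "q < 2*n"
  shows "rc n p < rc n q \<longleftrightarrow> (p mod 3 < q mod 3 \<or> (p mod 3 = q mod 3 \<and> p < q))"
  using assms mod3_cases[of p] mod3_cases[of q] unfolding rc_def by auto

lemma set_Pc: "set (Pc n) = {0..<2*n}"
  unfolding Pc_def using mod3_cases by auto

lemma distinct_Pc: "distinct (Pc n)"
  unfolding Pc_def by (auto simp: distinct_append)

lemma upt2: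
  assumes "p < q" "q < N"
  shows "filter (\<lambda>c. c = p \<or> c = q) [0..<N] = [p,q]"
proof (rule sorted_distinct_set_unique)
  show "sorted (filter (\<lambda>c. c = p \<or> c = q) [0..<N])" by (rule sorted_wrt_filter) simp
  show "distinct (filter (\<lambda>c. c = p \<or> c = q) [0..<N])" by simp
  show "sorted [p,q]" "distinct [p,q]" using assms by auto
  show "set (filter (\<lambda>c. c = p \<or> c = q) [0..<N]) = set [p,q]" using assms by auto
qed

lemma ord_Pc:
  assumes "p < 2*n" "q < 2*n" "rc n p < rc n q"
  shows "filter (\<lambda>c. c = p \<or> c = q) (Pc n) = [p,q]"
proof -
  have filt: "filter (\<lambda>c. c = p \<or> c = q) (filter (\<lambda>v. v mod 3 = k) [0..<2*n]) =
     filter (\<lambda>v. v mod 3 = k) (filter (\<lambda>c. c = p \<or> c = q) [0..<2*n])" for k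
    by (simp add: filter_filter conj_commute)
  have c: "p mod 3 < q mod 3 \<or> (p mod 3 = q mod 3 \<and> p < q)" using assms rc_less by blast
  show ?thesis
  proof (cases "p < q")
    case True
    then show ?thesis unfolding Pc_def filter_append filt upt2[OF True assms(2)]
      using c mod3_cases[of p] mod3_cases[of q] by auto
  next
    case False
    then have "q < p" using assms rc_less by (metis linorder_neqE_nat less_irrefl)
    have e: "(\<lambda>c. c = p \<or> c = q) = (\<lambda>c. c = q \<or> c = p)" by auto
    have fl: "filter (\<lambda>c. c = p \<or> c = q) [0..<2*n] = [q,p]"
      unfolding e using upt2[OF \<open>q < p\<close> assms(1)] .
    show ?thesis unfolding Pc_def filter_append filt fl
      using c False mod3_cases[of p] mod3_cases[of q] by auto
  qed
qed

definition aD :: "nat \<Rightarrow> nat \<Rightarrow> nat \<Rightarrow> nat \<Rightarrow> bool" where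
  "aD n x p q \<longleftrightarrow> q + x = p + 2*n"
definition aU1 :: "nat \<Rightarrow> nat \<Rightarrow> nat \<Rightarrow> nat \<Rightarrow> bool" where
  "aU1 n x p q \<longleftrightarrow> (q = p + 1 \<or> p = q + x \<or> q = p + n \<or> (p = 0 \<and> q + 1 = 2*n))"
definition aU2 :: "nat \<Rightarrow> nat \<Rightarrow> nat \<Rightarrow> nat \<Rightarrow> bool" where
  "aU2 n x p q \<longleftrightarrow> (p = q + 1 \<or> q = p + x \<or> p = q + n)"

lemma arc_cases:
  assumes "2 < x" "2*x < n" "n mod 3 = 1" "x mod 3 = 2"
    and "arcR (Pc n) (circ_adj (2*n) {1, x, n}) (rc n) p q"
  shows "p < 2*n \<and> q < 2*n \<and> ((aD n x p q \<and> q mod 3 = p mod 3) \<or> (aU1 n x p q \<and> q mod 3 = p mod 3 + 1)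
     \<or> (aU2 n x p q \<and> p mod 3 = 0 \<and> q mod 3 = 2))"
proof -
  have x1: "1 < x" "x < n" using assms by auto
  have b: "p < 2*n" "q < 2*n" using assms(5) by (auto simp: arcR_def set_Pc)
  have r: "p mod 3 < q mod 3 \<or> (p mod 3 = q mod 3 \<and> p < q)"
    using assms(5) rc_less[OF b] by (auto simp: arcR_def)
  have e: "q = p + 1 \<or> p = q + 1 \<or> q = p + x \<or> p = q + x \<or> q = p + n \<or> p = q + n \<or>
     q + 1 = p + 2*n \<or> p + 1 = q + 2*n \<or> q + x = p + 2*n \<or> p + x = q + 2*n"
    using assms(5) E_iff[OF x1] by (auto simp: arcR_def)
  have nm: "n mod 3 = 1" "x mod 3 = 2" using assms by auto
  have mp: "p mod 3 = 0 \<or> p mod 3 = 1 \<or> p mod 3 = 2" "q mod 3 = 0 \<or> q mod 3 = 1 \<or> q mod 3 = 2"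
    using mod3_cases by auto
  note ms = nm mod_mult_right_eq[symmetric]
  from e show ?thesis
  proof (elim disjE)
    assume h: "q = p + 1"
    have "(q mod 3 + 0 mod 3) mod 3 = (p mod 3 + 1 mod 3) mod 3" by (rule modeq) (simp add: h)
    then show ?thesis using mp r b h unfolding aU1_def by (auto simp: ms)
  next
    assume h: "p = q + 1"
    have "(p mod 3 + 0 mod 3) mod 3 = (q mod 3 + 1 mod 3) mod 3" by (rule modeq) (simp add: h)
    then show ?thesis using mp r b h unfolding aU2_def by (auto simp: ms)
  next
    assume h: "q = p + x"
    have "(q mod 3 + 0 mod 3) mod 3 = (p mod 3 + x mod 3) mod 3" by (rule modeq) (simp add: h)
    then show ?thesis using mp r b h unfolding aU2_def by (auto simp: ms)
  next
    assume h: "p = q + x"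
    have "(p mod 3 + 0 mod 3) mod 3 = (q mod 3 + x mod 3) mod 3" by (rule modeq) (simp add: h)
    then show ?thesis using mp r b h unfolding aU1_def by (auto simp: ms)
  next
    assume h: "q = p + n"
    have "(q mod 3 + 0 mod 3) mod 3 = (p mod 3 + n mod 3) mod 3" by (rule modeq) (simp add: h)
    then show ?thesis using mp r b h unfolding aU1_def by (auto simp: ms)
  next
    assume h: "p = q + n"
    have "(p mod 3 + 0 mod 3) mod 3 = (q mod 3 + n mod 3) mod 3" by (rule modeq) (simp add: h)
    then show ?thesis using mp r b h unfolding aU2_def by (auto simp: ms)
  next
    assume h: "q + 1 = p + 2*n"
    have p0: "p = 0" using h b by arith
    have "(q mod 3 + 1 mod 3) mod 3 = (p mod 3 + (2*n) mod 3) mod 3" by (rule modeq) (rule h)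
    then show ?thesis using mp r b h p0 unfolding aU1_def by (auto simp: ms)
  next
    assume h: "p + 1 = q + 2*n"
    have q0: "q = 0" using h b by arith
    have "(p mod 3 + 1 mod 3) mod 3 = (q mod 3 + (2*n) mod 3) mod 3" by (rule modeq) (rule h)
    then show ?thesis using mp r b h q0 by (auto simp: ms)
  next
    assume h: "q + x = p + 2*n"
    have "(q mod 3 + x mod 3) mod 3 = (p mod 3 + (2*n) mod 3) mod 3" by (rule modeq) (rule h)
    then show ?thesis using mp r b h unfolding aD_def by (auto simp: ms)
  next
    assume h: "p + x = q + 2*n"
    have "(p mod 3 + x mod 3) mod 3 = (q mod 3 + (2*n) mod 3) mod 3" by (rule modeq) (rule h)
    then show ?thesis using mp r b h assms(1,2) by (auto simp: ms)
  qed
qed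


lemma DD: "aD n x a b \<Longrightarrow> aD n x b c \<Longrightarrow> c < 2*n \<Longrightarrow> 2*x < n \<Longrightarrow> False"
  unfolding aD_def by linarith

lemma DUD: "aD n x a b \<Longrightarrow> aU1 n x b c \<or> aU2 n x b c \<Longrightarrow> aD n x c d \<Longrightarrow> d < 2*n \<Longrightarrow> 2*x < n \<Longrightarrow> False"
  unfolding aD_def aU1_def aU2_def by arith

lemma DUUD: "aD n x a b \<Longrightarrow> aU1 n x b c \<Longrightarrow> aU1 n x c d \<Longrightarrow> aD n x d e \<Longrightarrow> c < 2*n \<Longrightarrow> d < 2*n \<Longrightarrow> e < 2*n \<Longrightarrow> 2*x < n \<Longrightarrow> False"
  unfolding aD_def aU1_def aU2_def by arith

definition Ed :: "nat \<Rightarrow> nat \<Rightarrow> nat \<Rightarrow> nat \<Rightarrow> bool" where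
  "Ed n x p q \<longleftrightarrow> (q = p + 1 \<or> p = q + 1 \<or> q = p + x \<or> p = q + x \<or> q = p + n \<or> p = q + n \<or>
     q + 1 = p + 2*n \<or> p + 1 = q + 2*n \<or> q + x = p + 2*n \<or> p + x = q + 2*n)"

lemma DUU: "aD n x a b \<Longrightarrow> aU1 n x b c \<Longrightarrow> aU1 n x c d \<Longrightarrow> b < 2*n \<Longrightarrow> c < 2*n \<Longrightarrow> d < 2*n \<Longrightarrow>
   2 < x \<Longrightarrow> 2*x < n \<Longrightarrow> x \<noteq> 3 \<Longrightarrow> n \<noteq> 3*x \<Longrightarrow> Ed n x a d \<Longrightarrow> False"
  unfolding aD_def aU1_def Ed_def by arith

lemma UDU: "aU1 n x a b \<Longrightarrow> aD n x b c \<Longrightarrow> aU1 n x c d \<Longrightarrow> b < 2*n \<Longrightarrow> c < 2*n \<Longrightarrow> d < 2*n \<Longrightarrow>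
   2 < x \<Longrightarrow> 2*x < n \<Longrightarrow> x \<noteq> 3 \<Longrightarrow> n \<noteq> 3*x \<Longrightarrow> Ed n x a d \<Longrightarrow> False"
  unfolding aD_def aU1_def Ed_def by arith

lemma UUD: "aU1 n x a b \<Longrightarrow> aU1 n x b c \<Longrightarrow> aD n x c d \<Longrightarrow> b < 2*n \<Longrightarrow> c < 2*n \<Longrightarrow> d < 2*n \<Longrightarrow>
   2 < x \<Longrightarrow> 2*x < n \<Longrightarrow> x \<noteq> 3 \<Longrightarrow> n \<noteq> 3*x \<Longrightarrow> Ed n x a d \<Longrightarrow> False"
  unfolding aD_def aU1_def Ed_def by arith


lemma h4c:
  assumes h: "2 < x" "2*x < n" "n mod 3 = 1" "x mod 3 = 2"
  and ar: "arcR (Pc n) (circ_adj (2*n) {1, x, n}) (rc n) a b" "arcR (Pc n) (circ_adj (2*n) {1, x, n}) (rc n) b c"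
    "arcR (Pc n) (circ_adj (2*n) {1, x, n}) (rc n) c d" "arcR (Pc n) (circ_adj (2*n) {1, x, n}) (rc n) d e"
  shows False
proof -
  have bn: "b < 2*n" "c < 2*n" "d < 2*n" "e < 2*n"
    using arc_cases[OF h ar(1)] arc_cases[OF h ar(2)] arc_cases[OF h ar(3)] arc_cases[OF h ar(4)] by simp_all
  have t1: "(aD n x a b \<and> b mod 3 = a mod 3) \<or> (aU1 n x a b \<and> b mod 3 = a mod 3 + 1) \<or> (aU2 n x a b \<and> a mod 3 = 0 \<and> b mod 3 = 2)"
    using arc_cases[OF h ar(1)] by (simp only: simp_thms)
  have t2: "(aD n x b c \<and> c mod 3 = b mod 3) \<or> (aU1 n x b c \<and> c mod 3 = b mod 3 + 1) \<or> (aU2 n x b c \<and> b mod 3 = 0 \<and> c mod 3 = 2)"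
    using arc_cases[OF h ar(2)] by (simp only: simp_thms)
  have t3: "(aD n x c d \<and> d mod 3 = c mod 3) \<or> (aU1 n x c d \<and> d mod 3 = c mod 3 + 1) \<or> (aU2 n x c d \<and> c mod 3 = 0 \<and> d mod 3 = 2)"
    using arc_cases[OF h ar(3)] by (simp only: simp_thms)
  have t4: "(aD n x d e \<and> e mod 3 = d mod 3) \<or> (aU1 n x d e \<and> e mod 3 = d mod 3 + 1) \<or> (aU2 n x d e \<and> d mod 3 = 0 \<and> e mod 3 = 2)"
    using arc_cases[OF h ar(4)] by (simp only: simp_thms)
  have m: "e mod 3 < 3" by auto
  have nDD: "\<not>(aD n x a b \<and> aD n x b c)" "\<not>(aD n x b c \<and> aD n x c d)" "\<not> (aD n x c d \<and> aD n x d e)"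
    using DD[of n x a b c] DD[of n x b c d] DD[of n x c d e] bn h(2) by blast+
  have nDUD: "\<not>(aD n x a b \<and> (aU1 n x b c \<or> aU2 n x b c) \<and> aD n x c d)"
      "\<not>(aD n x b c \<and> (aU1 n x c d \<or> aU2 n x c d) \<and> aD n x d e)"
    using DUD[of n x a b c d] DUD[of n x b c d e] bn h(2) by blast+
  have nDUUD: "\<not>(aD n x a b \<and> aU1 n x b c \<and> aU1 n x c d \<and> aD n x d e)"
    using DUUD[of n x a b c d e] bn h(2) by blast
  from t1 t2 t3 t4 show False
    by (elim disjE conjE) (use m nDD nDUD nDUUD in \<open>simp_all\<close>)
qed


lemma h3c:
  assumes h: "2 < x" "2*x < n" "n mod 3 = 1" "x mod 3 = 2"
  and ar: "arcR (Pc n) (circ_adj (2*n) {1, x, n}) (rc n) a b" "arcR (Pc n) (circ_adj (2*n) {1, x, n}) (rc n) b c"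
    "arcR (Pc n) (circ_adj (2*n) {1, x, n}) (rc n) c d"
  shows "\<not> circ_adj (2*n) {1, x, n} a d"
proof
  assume "circ_adj (2*n) {1, x, n} a d"
  then have ed: "Ed n x a d" using E_iff[of x n a d] h unfolding Ed_def by auto
  have bn: "b < 2*n" "c < 2*n" "d < 2*n"
    using arc_cases[OF h ar(1)] arc_cases[OF h ar(2)] arc_cases[OF h ar(3)] by simp_all
  have t1: "(aD n x a b \<and> b mod 3 = a mod 3) \<or> (aU1 n x a b \<and> b mod 3 = a mod 3 + 1) \<or> (aU2 n x a b \<and> a mod 3 = 0 \<and> b mod 3 = 2)"
    using arc_cases[OF h ar(1)] by (simp only: simp_thms)
  have t2: "(aD n x b c \<and> c mod 3 = b mod 3) \<or> (aU1 n x b c \<and> c mod 3 = b mod 3 + 1) \<or> (aU2 n x b c \<and> b mod 3 = 0 \<and> c mod 3 = 2)"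
    using arc_cases[OF h ar(2)] by (simp only: simp_thms)
  have t3: "(aD n x c d \<and> d mod 3 = c mod 3) \<or> (aU1 n x c d \<and> d mod 3 = c mod 3 + 1) \<or> (aU2 n x c d \<and> c mod 3 = 0 \<and> d mod 3 = 2)"
    using arc_cases[OF h ar(3)] by (simp only: simp_thms)
  have x3: "x \<noteq> 3" "n \<noteq> 3*x" using h by auto
  have m: "d mod 3 < 3" by auto
  have nDD: "\<not>(aD n x a b \<and> aD n x b c)" "\<not>(aD n x b c \<and> aD n x c d)"
    using DD[of n x a b c] DD[of n x b c d] bn h(2) by blast+
  have nDUD: "\<not>(aD n x a b \<and> (aU1 n x b c \<or> aU2 n x b c) \<and> aD n x c d)"
    using DUD[of n x a b c d] bn h(2) by blast
  have p3: "\<not>(aD n x a b \<and> aU1 n x b c \<and> aU1 n x c d)" "\<not>(aU1 n x a b \<and> aD n x b c \<and> aU1 n x c d)"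
     "\<not>(aU1 n x a b \<and> aU1 n x b c \<and> aD n x c d)"
    using DUU[of n x a b c d] UDU[of n x a b c d] UUD[of n x a b c d] bn h(1,2) x3 ed by blast+
  from t1 t2 t3 show False
    by (elim disjE conjE) (use m nDD nDUD p3 in \<open>simp_all\<close>)
qed


theorem theorem25:
  fixes n x :: nat
  assumes "1 < x" and "x < n"
    and "n mod 3 = 1" and "x mod 3 = 2"
    and "2 < x" and "2 * x < n"
  shows "word_representable {0..<2*n} (circ_adj (2*n) {1, x, n})"
proof -
  have h: "2 < x" "2*x < n" "n mod 3 = 1" "x mod 3 = 2" using assms by auto
  have x1: "1 < x" "x < n" using assms by auto
  interpret S: strep "Pc n" "circ_adj (2*n) {1, x, n}" "rc n"
  proof (unfold_locales)
    show "distinct (Pc n)" by (rule distinct_Pc)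
  next
    fix p q assume "circ_adj (2*n) {1, x, n} p q"
    then show "circ_adj (2*n) {1, x, n} q p" unfolding E_iff[OF x1] by auto
  next
    fix p show "\<not> circ_adj (2*n) {1, x, n} p p" unfolding E_iff[OF x1] using x1 by auto
  next
    fix p q assume a: "p \<in> set (Pc n)" "q \<in> set (Pc n)" "rc n p = rc n q"
    then have b: "p < 2*n" "q < 2*n" by (auto simp: set_Pc)
    show "p = q" using rc_less[OF b] rc_less[OF b(2,1)] a(3) by (metis less_irrefl linorder_neqE_nat)
  next
    fix p q assume a: "p \<in> set (Pc n)" "q \<in> set (Pc n)" "rc n p < rc n q"
    then have b: "p < 2*n" "q < 2*n" by (auto simp: set_Pc)
    show "filter (\<lambda>c. c = p \<or> c = q) (Pc n) = [p, q]" by (rule ord_Pc[OF b a(3)])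
  next
    fix a b c d
    assume "arcR (Pc n) (circ_adj (2*n) {1, x, n}) (rc n) a b" "arcR (Pc n) (circ_adj (2*n) {1, x, n}) (rc n) b c"
      "arcR (Pc n) (circ_adj (2*n) {1, x, n}) (rc n) c d"
    then show "\<not> circ_adj (2*n) {1, x, n} a d" by (rule h3c[OF h])
  next
    fix a b c d e
    assume "arcR (Pc n) (circ_adj (2*n) {1, x, n}) (rc n) a b" "arcR (Pc n) (circ_adj (2*n) {1, x, n}) (rc n) b c"
      "arcR (Pc n) (circ_adj (2*n) {1, x, n}) (rc n) c d" "arcR (Pc n) (circ_adj (2*n) {1, x, n}) (rc n) d e"
    then show False by (rule h4c[OF h])
  qed
  have "word_representable (set (Pc n)) (circ_adj (2*n) {1, x, n})" by (rule S.wr)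
  then show ?thesis by (simp add: set_Pc)
qed

end
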